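(* There is a tight simplex of $13$ points in $\mathbb{H}\mathbb{P}^2$. In fact, there is such a tight simplex with cyclic symmetry, i.e., one that is mapped to itself by the isometry of $\mathbb{H}\mathbb{P}^2$ induced by the cyclic shift $\sigma(a,b,c)=(b,c,a)$ of $\mathbb{H}^3$.
   Context: $\mathbb{H}\mathbb{P}^2$ is the space of quaternionic lines in $\mathbb{H}^3$ (scalars acting on the right), points represented by unit vectors, with $\langle x,y\rangle = x^\dagger y$. A tight simplex of $N$ points in $\mathbb{H}\mathbb{P}^{2}$ is a set of $N$ distinct points $x_1,\dots,x_N$ with $|\langle x_i,x_j\rangle|^2=\frac{N-3}{3(N-1)}$ for all $i\ne j$. *)

theory Defs
  imports Complex_Main
begin

datatype quat = Quat (qre: real) (qi: real) (qj: real) (qk: real)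

definition qadd :: "quat \<Rightarrow> quat \<Rightarrow> quat" where
  "qadd p q = Quat (qre p + qre q) (qi p + qi q) (qj p + qj q) (qk p + qk q)"

text \<open>Hamilton product (i^2 = j^2 = k^2 = ijk = -1).\<close>
definition qmult :: "quat \<Rightarrow> quat \<Rightarrow> quat" where
  "qmult p q = Quat
     (qre p * qre q - qi p * qi q - qj p * qj q - qk p * qk q)
     (qre p * qi q + qi p * qre q + qj p * qk q - qk p * qj q)
     (qre p * qj q - qi p * qk q + qj p * qre q + qk p * qi q)
     (qre p * qk q + qi p * qj q - qj p * qi q + qk p * qre q)"

definition qcnj :: "quat \<Rightarrow> quat" where
  "qcnj q = Quat (qre q) (- qi q) (- qj q) (- qk q)"

definition qnormsq :: "quat \<Rightarrow> real" where
  "qnormsq q = (qre q)^2 + (qi q)^2 + (qj q)^2 + (qk q)^2"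

definition qone :: quat where "qone = Quat 1 0 0 0"

type_synonym hvec = "quat \<times> quat \<times> quat"

definition hinner :: "hvec \<Rightarrow> hvec \<Rightarrow> quat" where
  "hinner x y = (case x of (a, b, c) \<Rightarrow> case y of (d, e, f) \<Rightarrow>
      qadd (qadd (qmult (qcnj a) d) (qmult (qcnj b) e)) (qmult (qcnj c) f))"

text \<open>Right scalar multiplication and the quaternionic line (point of HP^2) spanned by x.\<close>
definition hscale :: "hvec \<Rightarrow> quat \<Rightarrow> hvec" where
  "hscale x q = (case x of (a, b, c) \<Rightarrow> (qmult a q, qmult b q, qmult c q))"

definition hline :: "hvec \<Rightarrow> hvec set" where
  "hline x = {hscale x q | q. True}"

text \<open>Cyclic shift sigma(a,b,c) = (b,c,a) of H^3; it acts on points of HP^2 by image.\<close>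
definition cshift :: "hvec \<Rightarrow> hvec" where
  "cshift x = (case x of (a, b, c) \<Rightarrow> (b, c, a))"

definition tight_simplex :: "nat \<Rightarrow> (nat \<Rightarrow> hvec) \<Rightarrow> bool" where
  "tight_simplex N x \<longleftrightarrow>
     (\<forall>i<N. hinner (x i) (x i) = qone) \<and>
     (\<forall>i<N. \<forall>j<N. i \<noteq> j \<longrightarrow>
        hline (x i) \<noteq> hline (x j) \<and>
        qnormsq (hinner (x i) (x j)) = (real N - 3) / (3 * (real N - 1)))"

definition simplex_points :: "nat \<Rightarrow> (nat \<Rightarrow> hvec) \<Rightarrow> hvec set set" where
  "simplex_points N x = hline ` x ` {..<N}"

end

theory Submission
  imports Defs
begin


lemma tele: "2 * sin (a/2) * (\<Sum>j<n. cos (real j * a)) = sin ((2*real n - 1) * a / 2) + sin (a/2)"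
proof (induction n)
  case 0 then show ?case by (simp add: sin_minus)
next
  case (Suc n)
  have e: "2 * sin (a/2) * cos (real n * a) = sin ((2*real n + 1) * a / 2) - sin ((2*real n - 1) * a / 2)"
  proof -
    have 1: "a/2 + real n * a = (2*real n + 1) * a / 2" by (simp add: field_simps)
    have 2: "a/2 - real n * a = - ((2*real n - 1) * a / 2)" by (simp add: field_simps)
    show ?thesis using sin_times_cos[of "a/2" "real n * a"] unfolding 1 2 sin_minus by simp
  qed
  show ?case using Suc e by (simp add: algebra_simps)
qed

lemma sum13:
  fixes D :: int assumes "\<not> 13 dvd D"
  defines "a \<equiv> 2*pi*of_int D/13"
  shows "(\<Sum>j<13. cos (real j * a)) = 0"
proof -
  have s1: "sin ((2*real (13::nat) - 1) * a / 2) = - sin (a/2)"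
  proof -
    have "(2*real (13::nat) - 1) * a / 2 = (2*pi) * of_int D - a/2" unfolding a_def by (simp add: field_simps)
    then have "sin ((2*real (13::nat) - 1) * a / 2) = sin ((2*pi) * of_int D - a/2)" by (simp only:)
    also have "\<dots> = - sin (a/2)" by (simp add: sin_diff)
    finally show ?thesis .
  qed
  have s2: "sin (a/2) \<noteq> 0"
  proof
    assume "sin (a/2) = 0"
    then obtain i :: int where "a/2 = of_int i * pi" by (auto simp: sin_zero_iff_int2)
    then have "pi * of_int D = pi * of_int (13*i)" unfolding a_def by (simp add: field_simps)
    then have "D = 13*i" by simp
    with assms show False by simp
  qed
  from tele[of a 13] s1 s2 show ?thesis by simp
qed

lemma key:
  fixes D :: int assumes "\<not> 13 dvd D"
  defines "a \<equiv> 2*pi*of_int D/13"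
  shows "cos a * cos (3*a) + cos (3*a) * cos (9*a) + cos a * cos (9*a) = -1/4"
proof -
  have sym: "cos (real k * a) = cos (real (13 - k) * a)" if "k \<le> 13" for k
  proof -
    have "real (13 - k) * a = (2*pi) * of_int D - real k * a" using that unfolding a_def
      by (simp add: of_nat_diff field_simps)
    then show ?thesis by (simp add: cos_diff)
  qed
  have S: "(\<Sum>j<13. cos (real j * a)) = 0" using sum13[OF assms(1)] unfolding a_def .
  have E: "(\<Sum>j<13. cos (real j * a)) = 1 + cos a + cos (2*a) + cos (3*a) + cos (4*a) + cos (5*a) + cos (6*a)
     + cos (7*a) + cos (8*a) + cos (9*a) + cos (10*a) + cos (11*a) + cos (12*a)"
    by (simp add: eval_nat_numeral)
  have c12: "cos (12*a) = cos a" using sym[of 1] by simp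
  have c11: "cos (11*a) = cos (2*a)" using sym[of 2] by simp
  have c10: "cos (10*a) = cos (3*a)" using sym[of 3] by simp
  have c9: "cos (9*a) = cos (4*a)" using sym[of 4] by simp
  have c8: "cos (8*a) = cos (5*a)" using sym[of 5] by simp
  have c7: "cos (7*a) = cos (6*a)" using sym[of 6] by simp
  have p1: "cos a * cos (3*a) = (cos (2*a) + cos (4*a))/2"
    using cos_times_cos[of "3*a" a] by (simp add: mult.commute)
  have p2: "cos (3*a) * cos (9*a) = (cos (6*a) + cos (12*a))/2"
    using cos_times_cos[of "9*a" "3*a"] by (simp add: mult.commute)
  have p3: "cos a * cos (9*a) = (cos (8*a) + cos (10*a))/2"
    using cos_times_cos[of "9*a" "a"] by (simp add: mult.commute)
  have T: "cos (2*a) + cos (4*a) + cos (6*a) + cos (8*a) + cos (10*a) + cos (12*a) = -1/2"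
    using S E c12 c11 c10 c9 c8 c7 by linarith
  show ?thesis unfolding p1 p2 p3 using T by (simp add: field_simps)
qed


definition om :: quat where "om = Quat (-1/2) (-1/2) (-1/2) (-1/2)"
definition om2 :: quat where "om2 = qmult om om"

lemma om2_eq: "om2 = Quat (-1/2) (1/2) (1/2) (1/2)"
  by (simp add: om2_def om_def qmult_def)
lemma om3: "qmult om2 om = qone" "qmult om om2 = qone"
  by (simp_all add: om2_eq om_def qmult_def qone_def)

lemma qassoc: "qmult (qmult p q) s = qmult p (qmult q s)"
  by (cases p; cases q; cases s) (simp add: qmult_def algebra_simps)
lemma qmult_one: "qmult p qone = p" "qmult qone p = p"
  by (cases p; simp add: qmult_def qone_def)+

lemma L0: "qmult (qcnj (Quat a b 0 0)) (Quat c d 0 0) = Quat (a*c+b*d) (a*d-b*c) 0 0"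
  by (simp add: qmult_def qcnj_def)
lemma Lom: "qmult (qcnj (qmult (Quat a b 0 0) om)) (qmult (Quat c d 0 0) om) = Quat (a*c+b*d) 0 0 (a*d-b*c)"
  by (simp add: qmult_def qcnj_def om_def algebra_simps)
lemma Lom2: "qmult (qcnj (qmult (Quat a b 0 0) om2)) (qmult (Quat c d 0 0) om2) = Quat (a*c+b*d) 0 (a*d-b*c) 0"
  by (simp add: qmult_def qcnj_def om2_eq algebra_simps)

lemma hscale_one: "hscale x qone = x"
  by (cases x) (simp add: hscale_def qmult_one)
lemma hinner_scale_r: "hinner y (hscale x q) = qmult (hinner y x) q"
  by (cases x; cases y; simp add: hinner_def hscale_def qmult_def qadd_def qcnj_def split: quat.splits; simp add: algebra_simps)
lemma hinner_scale_l: "hinner (hscale x q) y = qmult (qcnj q) (hinner x y)"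
  by (cases x; cases y; simp add: hinner_def hscale_def qmult_def qadd_def qcnj_def split: quat.splits; simp add: algebra_simps)

lemma cnj_self: "qmult (qcnj q) q = Quat (qnormsq q) 0 0 0"
  by (cases q) (simp add: qmult_def qcnj_def qnormsq_def power2_eq_square algebra_simps)

lemma line_neq:
  assumes "hinner x x = qone" "hinner y y = qone" "qnormsq (hinner y x) \<noteq> 1"
  shows "hline x \<noteq> hline y"
proof
  assume eq: "hline x = hline y"
  have "x \<in> hline x" unfolding hline_def by (rule CollectI, rule exI[of _ qone], simp add: hscale_one)
  then obtain q where q: "x = hscale y q" using eq unfolding hline_def by blast
  have "hinner y x = q" using q assms(2) by (simp add: hinner_scale_r qmult_one)
  moreover have "hinner x x = Quat (qnormsq q) 0 0 0"
    using q assms(2) by (simp add: hinner_scale_r hinner_scale_l qmult_one cnj_self)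
  ultimately show False using assms by (simp add: qone_def)
qed

lemma cshift_scale: "cshift (hscale x q) = hscale (cshift x) q"
  by (cases x) (simp add: cshift_def hscale_def)

lemma cshift_line: "cshift ` hline x = hline (cshift x)"
proof (intro equalityI subsetI)
  fix y assume "y \<in> cshift ` hline x"
  then show "y \<in> hline (cshift x)" unfolding hline_def by (auto simp: cshift_scale)
next
  fix y assume "y \<in> hline (cshift x)"
  then obtain q where "y = hscale (cshift x) q" unfolding hline_def by blast
  then have "y = cshift (hscale x q)" by (simp add: cshift_scale)
  moreover have "hscale x q \<in> hline x" unfolding hline_def by blast
  ultimately show "y \<in> cshift ` hline x" by blast
qed

lemma line_scale_om: "hline (hscale x om) = hline x"
proof -
  have hh: "hscale (hscale x p) q = hscale x (qmult p q)" for p q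
    by (cases x) (simp add: hscale_def qassoc)
  show ?thesis unfolding hline_def
  proof (intro equalityI subsetI)
    fix y assume "y \<in> {hscale (hscale x om) q |q. True}"
    then show "y \<in> {hscale x q |q. True}" by (auto simp: hh)
  next
    fix y assume "y \<in> {hscale x q |q. True}"
    then obtain q where "y = hscale x q" by blast
    then have "y = hscale (hscale x om) (qmult om2 q)"
      by (simp add: hh qassoc[symmetric] om3 qmult_one)
    then show "y \<in> {hscale (hscale x om) q |q. True}" by blast
  qed
qed



definition rr :: real where "rr = inverse (sqrt 3)"
lemma rr2: "rr * rr = 1/3"
proof -
  have "sqrt 3 * sqrt 3 = (3::real)" by simp
  then show ?thesis unfolding rr_def by (simp add: field_simps)
qed
definition ang :: "int \<Rightarrow> real" where "ang n = 2*pi*of_int n/13"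
definition zz :: "int \<Rightarrow> quat" where "zz n = Quat (rr*cos(ang n)) (rr*sin(ang n)) 0 0"
definition X :: "int \<Rightarrow> hvec" where "X t = (zz t, qmult (zz (3*t)) om, qmult (zz (9*t)) om2)"
definition xs :: "nat \<Rightarrow> hvec" where "xs i = X (int i)"

lemma H1: "rr*cos(ang s)*(rr*cos(ang t)) + rr*sin(ang s)*(rr*sin(ang t)) = rr*rr*cos(ang(t-s))"
proof -
  have eq: "ang (t-s) = ang t - ang s" by (simp add: ang_def field_simps)
  show ?thesis unfolding eq cos_diff by (simp add: algebra_simps)
qed
lemma H2: "rr*cos(ang s)*(rr*sin(ang t)) - rr*sin(ang s)*(rr*cos(ang t)) = rr*rr*sin(ang(t-s))"
proof -
  have eq: "ang (t-s) = ang t - ang s" by (simp add: ang_def field_simps)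
  show ?thesis unfolding eq sin_diff by (simp add: algebra_simps)
qed

lemma inner_X: "hinner (X s) (X t) = Quat (rr*rr*(cos (ang (t-s)) + cos (ang (3*t-3*s)) + cos (ang (9*t-9*s))))
   (rr*rr*sin (ang (t-s))) (rr*rr*sin (ang (9*t-9*s))) (rr*rr*sin (ang (3*t-3*s)))"
  unfolding hinner_def X_def zz_def by (simp add: L0 Lom Lom2 qadd_def H1 H2 distrib_left)

lemma inner_self: "hinner (X s) (X s) = qone"
  by (simp add: inner_X rr2 ang_def qone_def)

lemma alg9: "(1/3*(x+y+z))^2 + (1/3*p)^2 + (1/3*q)^2 + (1/3*w)^2 = 1/9 * (x^2+p^2 + (y^2+w^2) + (z^2+q^2) + 2*(x*y+y*z+x*z))" for x y z p q w :: real
  by (simp add: power2_eq_square field_simps)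

lemma norm_X:
  assumes "\<not> 13 dvd (t - s)"
  shows "qnormsq (hinner (X s) (X t)) = 5/18"
proof -
  define a where "a = 2*pi*of_int (t-s)/13"
  have k: "cos a * cos (3*a) + cos (3*a) * cos (9*a) + cos a * cos (9*a) = -1/4"
    using key[OF assms] unfolding a_def .
  have e1: "ang (t-s) = a" "ang (3*t-3*s) = 3*a" "ang (9*t-9*s) = 9*a"
    unfolding a_def ang_def by (simp_all add: field_simps)
  have "qnormsq (hinner (X s) (X t)) = (rr*rr*(cos a + cos (3*a) + cos (9*a)))^2 + (rr*rr*sin a)^2 + (rr*rr*sin (9*a))^2 + (rr*rr*sin (3*a))^2"
    unfolding inner_X e1 qnormsq_def by simp
  also have "\<dots> = 1/9 * ((cos a)^2 + (sin a)^2 + ((cos (3*a))^2 + (sin (3*a))^2) + ((cos (9*a))^2 + (sin (9*a))^2)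
       + 2 * (cos a * cos (3*a) + cos (3*a) * cos (9*a) + cos a * cos (9*a)))"
    unfolding rr2 by (rule alg9)
  also have "\<dots> = 5/18"
  proof -
    have q: "(cos x)^2 + (sin x)^2 = 1" for x :: real by simp
    show ?thesis unfolding q k by simp
  qed
  finally show ?thesis .
qed

lemma zz_cong: assumes "n mod 13 = m mod 13" shows "zz n = zz m"
proof -
  obtain k where k: "n = m + 13*k" using assms by (metis mod_eqE mult.commute add.commute)
  have "ang n = ang m + (2*pi) * of_int k" unfolding k ang_def by (simp add: field_simps)
  then have "cos (ang n) = cos (ang m)" "sin (ang n) = sin (ang m)"
    by (simp_all only: cos_add sin_add cos_int_2pin sin_int_2pin)
  then show ?thesis unfolding zz_def by simp
qed

lemma cshift_X: "cshift (X t) = hscale (X ((3*t) mod 13)) om"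
proof -
  have a: "zz ((3*t) mod 13) = zz (3*t)" by (rule zz_cong) simp
  have b: "zz (3*((3*t) mod 13)) = zz (9*t)" by (rule zz_cong) (simp add: mod_mult_right_eq)
  have e27: "(27*t) mod 13 = t mod 13"
  proof -
    have h: "27*t = t + (2*t)*13" by simp
    show ?thesis unfolding h by (rule mod_mult_self1)
  qed
  have e9: "(9*((3*t) mod 13)) mod 13 = (27*t) mod 13" by (simp add: mod_mult_right_eq)
  have c: "zz (9*((3*t) mod 13)) = zz t" by (rule zz_cong) (simp only: e9 e27)
  have d: "qmult (qmult z om) om = qmult z om2" for z by (simp only: qassoc om2_def)
  have e: "qmult (qmult z om2) om = z" for z by (simp only: qassoc om3 qmult_one)
  show ?thesis unfolding X_def cshift_def hscale_def prod.case d e a b c ..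
qed



lemma not_dvd13: assumes "i < 13" "j < 13" "i \<noteq> j" shows "\<not> 13 dvd (int j - int i)"
proof
  assume "13 dvd (int j - int i)"
  then obtain k where "int j - int i = 13 * k" by (elim dvdE)
  with assms show False by presburger
qed

lemma perm13: "(\<lambda>i::nat. (3*i) mod 13) ` {..<13} = {..<13}"
proof (intro equalityI subsetI)
  fix s assume "s \<in> (\<lambda>i::nat. (3*i) mod 13) ` {..<13}"
  then show "s \<in> {..<13}" by auto
next
  fix s :: nat assume s: "s \<in> {..<13}"
  have e9: "(3*((9*s) mod 13)) mod 13 = (27*s) mod 13" by (simp add: mod_mult_right_eq)
  have h: "27*s = s + (2*s)*13" by simp
  have "(27*s) mod 13 = s mod 13" unfolding h by (rule mod_mult_self1)
  with e9 s have "s = (3*((9*s) mod 13)) mod 13" by simp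
  moreover have "(9*s) mod 13 \<in> {..<13}" by simp
  ultimately show "s \<in> (\<lambda>i::nat. (3*i) mod 13) ` {..<13}" by blast
qed

lemma cs_xs: "hline (cshift (xs i)) = hline (xs ((3*i) mod 13))"
proof -
  have "int ((3*i) mod 13) = (3 * int i) mod 13" by (simp add: zmod_int)
  then show ?thesis unfolding xs_def using cshift_X[of "int i"] line_scale_om by simp
qed

lemma ts: "tight_simplex 13 xs"
  unfolding tight_simplex_def
proof (intro conjI allI impI)
  fix i :: nat assume "i < 13"
  show "hinner (xs i) (xs i) = qone" unfolding xs_def by (rule inner_self)
next
  fix i j :: nat assume a: "i < 13" "j < 13" "i \<noteq> j"
  have n1: "qnormsq (hinner (xs i) (xs j)) = 5/18"
    unfolding xs_def by (rule norm_X[OF not_dvd13[OF a]])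
  have n2: "qnormsq (hinner (xs j) (xs i)) = 5/18"
    unfolding xs_def by (rule norm_X[OF not_dvd13]) (use a in auto)
  show "hline (xs i) \<noteq> hline (xs j)"
    by (rule line_neq) (simp_all add: xs_def inner_self n2[unfolded xs_def])
  show "qnormsq (hinner (xs i) (xs j)) = (real 13 - 3) / (3 * (real 13 - 1))"
    using n1 by simp
qed

theorem theorem4p9:
  shows "(\<exists>x. tight_simplex 13 x) \<and>
         (\<exists>x. tight_simplex 13 x \<and>
              (\<lambda>L. cshift ` L) ` simplex_points 13 x = simplex_points 13 x)"
proof -
  have "(\<lambda>L. cshift ` L) ` simplex_points 13 xs = (\<lambda>i. hline (xs ((3*i) mod 13))) ` {..<13}"
    unfolding simplex_points_def image_image cshift_line cs_xs ..
  also have "\<dots> = hline ` xs ` ((\<lambda>i::nat. (3*i) mod 13) ` {..<13})"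
    by (simp add: image_image)
  also have "\<dots> = simplex_points 13 xs" unfolding perm13 simplex_points_def ..
  finally show ?thesis using ts by blast
qed

end
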